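(* Let $J=(a,b)\subseteq\mathbb R$ be an open interval (possibly unbounded) and let $A:J\to\mathbb R$ be differentiable with $|A'(x)-A'(y)|\le M|x-y|$ for all $x,y\in J$, for some constant $M>0$. Then $c^2(\mathbf z)\le 8M^2$ for every three-tuple $\mathbf z$ of distinct points on $\Gamma=\{x+iA(x):x\in J\}$.
   Context: The Menger curvature $c(\mathbf z)$ of three points $z_1,z_2,z_3\in\mathbb C$ is $0$ if they are collinear and otherwise the reciprocal of the radius of the unique circle through them. *)

theory Defs
  imports "HOL-Analysis.Analysis" "HOL-Library.Extended_Real"
begin

definition menger_curvature :: "complex \<Rightarrow> complex \<Rightarrow> complex \<Rightarrow> real" where
  "menger_curvature z1 z2 z3 =
     (if collinear {z1, z2, z3} then 0
      else 1 / (THE r. \<exists>w. dist w z1 = r \<and> dist w z2 = r \<and> dist w z3 = r))"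

end

theory Submission
  imports Defs
begin

lemma sorted_bound:
  fixes A :: "real \<Rightarrow> real" and M x1 x2 x3 :: real
  assumes "x1 < x2" "x2 < x3"
    and der: "\<And>y. x1 \<le> y \<Longrightarrow> y \<le> x3 \<Longrightarrow> DERIV A y :> deriv A y"
    and lip: "\<And>x y. x1 \<le> x \<Longrightarrow> x \<le> x3 \<Longrightarrow> x1 \<le> y \<Longrightarrow> y \<le> x3 \<Longrightarrow> \<bar>deriv A x - deriv A y\<bar> \<le> M * \<bar>x - y\<bar>"
  and "M > 0"
  shows "\<bar>(x2-x1)*(A x3 - A x1) - (A x2 - A x1)*(x3-x1)\<bar> \<le> M * (x2-x1)*(x3-x1)*(x3-x2)"
proof -
  obtain \<xi> where \<xi>: "x1 < \<xi>" "\<xi> < x2" "A x2 - A x1 = (x2 - x1) * deriv A \<xi>"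
    using MVT2[of x1 x2 A "deriv A"] assms by auto
  obtain \<eta> where \<eta>: "x2 < \<eta>" "\<eta> < x3" "A x3 - A x2 = (x3 - x2) * deriv A \<eta>"
    using MVT2[of x2 x3 A "deriv A"] assms by auto
  have L: "\<bar>deriv A \<eta> - deriv A \<xi>\<bar> \<le> M * (x3 - x1)"
  proof -
    have "\<bar>deriv A \<eta> - deriv A \<xi>\<bar> \<le> M * \<bar>\<eta> - \<xi>\<bar>" using lip[of \<eta> \<xi>] \<xi> \<eta> assms by auto
    moreover have "M \<ge> 0" using assms by auto
    ultimately show ?thesis using \<xi> \<eta> by (smt (verit) mult_left_mono)
  qed
  have "(x2-x1)*(A x3 - A x1) - (A x2 - A x1)*(x3-x1) = (x2-x1)*(x3-x2)*(deriv A \<eta> - deriv A \<xi>)"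
  proof -
    have e3: "A x3 - A x1 = (x3 - x2) * deriv A \<eta> + (x2 - x1) * deriv A \<xi>" using \<xi> \<eta> by linarith
    show ?thesis unfolding e3 \<xi>(3) by algebra
  qed
  then have "\<bar>(x2-x1)*(A x3 - A x1) - (A x2 - A x1)*(x3-x1)\<bar> = (x2-x1)*(x3-x2)*\<bar>deriv A \<eta> - deriv A \<xi>\<bar>"
    using assms by (simp add: abs_mult)
  also have "\<dots> \<le> (x2-x1)*(x3-x2)*(M * (x3 - x1))"
    using L assms by (intro mult_left_mono) auto
  finally show ?thesis by (simp add: algebra_simps)
qed

lemma collinear_if_D0:
  fixes z1 z2 z3 :: complex
  assumes "z1 \<noteq> z2"
    and D: "(Re z2 - Re z1)*(Im z3 - Im z1) - (Im z2 - Im z1)*(Re z3 - Re z1) = 0"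
  shows "collinear {z1, z2, z3}"
proof -
  define pp qq ss tt where "pp = Re z2 - Re z1" "qq = Im z2 - Im z1" "ss = Re z3 - Re z1" "tt = Im z3 - Im z1"
  have n: "pp^2 + qq^2 \<noteq> 0" using assms unfolding pp_qq_ss_tt_def
    by (metis complex_eqI eq_iff_diff_eq_0 sum_power2_eq_zero_iff)
  define k where "k = ((pp * ss) + (qq * tt))/(pp^2+qq^2)"
  have Dk: "pp * tt - qq * ss = 0" using D unfolding pp_qq_ss_tt_def by simp
  have "k * pp = ss"
  proof -
    have "(pp * ss + qq * tt)*pp = ss*(pp^2+qq^2)" using Dk by (simp add: power2_eq_square algebra_simps)
    then show ?thesis using n unfolding k_def by (simp add: field_simps)
  qed
  moreover have "k * qq = tt"
  proof -
    have "(pp * ss + qq * tt)*qq = tt*(pp^2+qq^2)" using Dk by (simp add: power2_eq_square algebra_simps)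
    then show ?thesis using n unfolding k_def by (simp add: field_simps)
  qed
  ultimately have "z3 = z1 + k *\<^sub>R (z2 - z1)"
    unfolding pp_qq_ss_tt_def by (intro complex_eqI) (auto simp: scaleR_conv_of_real algebra_simps)
  moreover have "z1 = z1 + 0 *\<^sub>R (z2 - z1)" "z2 = z1 + 1 *\<^sub>R (z2 - z1)" by auto
  ultimately show ?thesis unfolding collinear_alt by blast
qed


lemma dist_sq_c: "(dist w (z::complex))^2 = (Re w - Re z)^2 + (Im w - Im z)^2"
  by (simp add: dist_norm cmod_power2)

lemma menger_sq:
  fixes z1 z2 z3 :: complex
  defines "pp \<equiv> Re z2 - Re z1" and "qq \<equiv> Im z2 - Im z1"
    and "ss \<equiv> Re z3 - Re z1" and "tt \<equiv> Im z3 - Im z1"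
  defines "D \<equiv> pp * tt - qq * ss"
  defines "Q \<equiv> (pp^2 + qq^2) * (ss^2 + tt^2) * ((ss - pp)^2 + (tt - qq)^2)"
  assumes nc: "\<not> collinear {z1, z2, z3}" and D0: "D \<noteq> 0"
  shows "(menger_curvature z1 z2 z3)^2 * Q = 4 * D^2"
proof -
  have Qpos: "Q > 0"
  proof -
    have "pp^2 + qq^2 \<noteq> 0" using D0 unfolding D_def by auto
    moreover have "ss^2 + tt^2 \<noteq> 0" using D0 unfolding D_def by auto
    moreover have "(ss - pp)^2 + (tt - qq)^2 \<noteq> 0"
    proof
      assume "(ss - pp)^2 + (tt - qq)^2 = 0"
      then have "ss = pp" "tt = qq" by auto
      then show False using D0 unfolding D_def by (simp add: mult.commute)
    qed
    ultimately show ?thesis unfolding Q_def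
      by (metis add_nonneg_nonneg order_le_less zero_le_power2 zero_less_mult_iff)
  qed
  have key: "(\<exists>w. dist w z1 = r \<and> dist w z2 = r \<and> dist w z3 = r) \<longleftrightarrow> r = sqrt (Q / (4 * D^2))" for r
  proof
    assume "\<exists>w. dist w z1 = r \<and> dist w z2 = r \<and> dist w z3 = r"
    then obtain w where w: "dist w z1 = r" "dist w z2 = r" "dist w z3 = r" by blast
    define wx wy where "wx = Re w - Re z1" "wy = Im w - Im z1"
    have r0: "r \<ge> 0" using w(1) by auto
    have d1: "r^2 = wx^2 + wy^2" using w(1) dist_sq_c[of w z1] unfolding wx_wy_def by simp
    have d2: "r^2 = (wx - pp)^2 + (wy - qq)^2" using w(2) dist_sq_c[of w z2] unfolding wx_wy_def pp_def qq_def
      by (simp add: algebra_simps)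
    have d3: "r^2 = (wx - ss)^2 + (wy - tt)^2" using w(3) dist_sq_c[of w z3] unfolding wx_wy_def ss_def tt_def
      by (simp add: algebra_simps)
    have e1: "2 * (wx * pp + wy * qq) = pp^2 + qq^2" using d1 d2 by (simp add: power2_eq_square algebra_simps)
    have e2: "2 * (wx * ss + wy * tt) = ss^2 + tt^2" using d1 d3 by (simp add: power2_eq_square algebra_simps)
    have fx: "2 * D * wx = (pp^2 + qq^2) * tt - (ss^2 + tt^2) * qq"
    proof -
      have "2 * D * wx = tt * (2 * (wx * pp + wy * qq)) - qq * (2 * (wx * ss + wy * tt))"
        unfolding D_def by algebra
      then show ?thesis unfolding e1 e2 by simp
    qed
    have fy: "2 * D * wy = (ss^2 + tt^2) * pp - (pp^2 + qq^2) * ss"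
    proof -
      have "2 * D * wy = pp * (2 * (wx * ss + wy * tt)) - ss * (2 * (wx * pp + wy * qq))"
        unfolding D_def by algebra
      then show ?thesis unfolding e1 e2 by simp
    qed
    have "4 * D^2 * r^2 = (2 * D * wx)^2 + (2 * D * wy)^2" unfolding d1 by algebra
    also have "\<dots> = Q" unfolding fx fy Q_def by algebra
    finally have "r^2 = Q / (4 * D^2)" using D0 by (simp add: field_simps)
    then show "r = sqrt (Q / (4 * D^2))" using r0 by (simp add: real_sqrt_unique)
  next
    assume r: "r = sqrt (Q / (4 * D^2))"
    define wx where "wx = ((pp^2 + qq^2) * tt - (ss^2 + tt^2) * qq) / (2 * D)"
    define wy where "wy = ((ss^2 + tt^2) * pp - (pp^2 + qq^2) * ss) / (2 * D)"
    define w where "w = z1 + Complex wx wy"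
    have x1: "Re w - Re z1 = wx" "Im w - Im z1 = wy" unfolding w_def by auto
    have x2: "Re w - Re z2 = wx - pp" "Im w - Im z2 = wy - qq" unfolding w_def pp_def qq_def by auto
    have x3: "Re w - Re z3 = wx - ss" "Im w - Im z3 = wy - tt" unfolding w_def ss_def tt_def by auto
    have fx: "2 * D * wx = (pp^2 + qq^2) * tt - (ss^2 + tt^2) * qq" unfolding wx_def using D0 by simp
    have fy: "2 * D * wy = (ss^2 + tt^2) * pp - (pp^2 + qq^2) * ss" unfolding wy_def using D0 by simp
    have "D * (2 * (wx * pp + wy * qq)) = pp * (2 * D * wx) + qq * (2 * D * wy)" by algebra
    also have "\<dots> = D * (pp^2 + qq^2)" unfolding fx fy unfolding D_def by algebra
    finally have e1: "2 * (wx * pp + wy * qq) = pp^2 + qq^2" using D0 by simp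
    have "D * (2 * (wx * ss + wy * tt)) = ss * (2 * D * wx) + tt * (2 * D * wy)" by algebra
    also have "\<dots> = D * (ss^2 + tt^2)" unfolding fx fy unfolding D_def by algebra
    finally have e2: "2 * (wx * ss + wy * tt) = ss^2 + tt^2" using D0 by simp
    have q: "wx^2 + wy^2 = Q / (4 * D^2)"
    proof -
      have "4 * D^2 * (wx^2 + wy^2) = (2 * D * wx)^2 + (2 * D * wy)^2" by algebra
      also have "\<dots> = Q" unfolding fx fy Q_def by algebra
      finally show ?thesis using D0 by (simp add: field_simps)
    qed
    have "(dist w z1)^2 = r^2" using dist_sq_c[of w z1] q r x1
      by (metis Q_def D0 divide_nonneg_pos mult_nonneg_nonneg real_sqrt_pow2 zero_le_power2 zero_less_power2 zero_less_mult_iff zero_less_numeral add_nonneg_nonneg)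
    moreover have "r \<ge> 0" using r Qpos by simp
    ultimately have a1: "dist w z1 = r" using power2_eq_imp_eq zero_le_dist by blast
    have "(dist w z2)^2 = (dist w z1)^2" unfolding dist_sq_c x1 x2 using e1 by (simp add: power2_eq_square algebra_simps)
    hence a2: "dist w z2 = r" using a1 power2_eq_imp_eq zero_le_dist by metis
    have "(dist w z3)^2 = (dist w z1)^2" unfolding dist_sq_c x1 x3 using e2 by (simp add: power2_eq_square algebra_simps)
    hence a3: "dist w z3 = r" using a1 power2_eq_imp_eq zero_le_dist by metis
    show "\<exists>w. dist w z1 = r \<and> dist w z2 = r \<and> dist w z3 = r" using a1 a2 a3 by blast
  qed
  have the: "(THE r. \<exists>w. dist w z1 = r \<and> dist w z2 = r \<and> dist w z3 = r) = sqrt (Q / (4 * D^2))"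
    using key by simp
  have "menger_curvature z1 z2 z3 = 1 / sqrt (Q / (4 * D^2))"
    unfolding menger_curvature_def using nc the by simp
  moreover have X: "Q / (4 * D^2) > 0" using Qpos D0 by simp
  ultimately have "(menger_curvature z1 z2 z3)^2 = 1 / (Q / (4 * D^2))"
    by (simp add: power_one_over)
  then show ?thesis using Qpos D0 by (simp add: field_simps)
qed


lemma perm_bound:
  fixes g :: "real \<Rightarrow> real \<Rightarrow> real \<Rightarrow> real" and P :: "real \<Rightarrow> bool"
  assumes g12: "\<And>a b c. \<bar>g b a c\<bar> = \<bar>g a b c\<bar>" and g23: "\<And>a b c. \<bar>g a c b\<bar> = \<bar>g a b c\<bar>"
    and S: "\<And>a b c. P a \<Longrightarrow> P b \<Longrightarrow> P c \<Longrightarrow> a < b \<Longrightarrow> b < c \<Longrightarrow> \<bar>g a b c\<bar> \<le> M * \<bar>b - a\<bar> * \<bar>c - a\<bar> * \<bar>c - b\<bar>"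
    and P: "P x1" "P x2" "P x3" and d: "x1 \<noteq> x2" "x2 \<noteq> x3" "x1 \<noteq> x3"
  shows "\<bar>g x1 x2 x3\<bar> \<le> M * \<bar>x2 - x1\<bar> * \<bar>x3 - x1\<bar> * \<bar>x3 - x2\<bar>"
proof -
  have g13: "\<bar>g c b a\<bar> = \<bar>g a b c\<bar>" for a b c using g23[of c a b] g12[of a c b] g23[of a b c] by simp
  have g231: "\<bar>g b c a\<bar> = \<bar>g a b c\<bar>" for a b c using g23[of b a c] g12[of a b c] by simp
  have g312: "\<bar>g c a b\<bar> = \<bar>g a b c\<bar>" for a b c using g12[of a c b] g23[of a b c] by simp
  consider "x1 < x2" "x2 < x3" | "x1 < x3" "x3 < x2" | "x2 < x1" "x1 < x3" | "x2 < x3" "x3 < x1"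
    | "x3 < x1" "x1 < x2" | "x3 < x2" "x2 < x1" using d by linarith
  then show ?thesis
  proof cases
    case 1 then show ?thesis using S[of x1 x2 x3] P by simp
  next
    case 2 then show ?thesis using S[of x1 x3 x2] P g23[where a=x1 and b=x2 and c=x3] by (simp add: abs_minus_commute mult_ac)
  next
    case 3 then show ?thesis using S[of x2 x1 x3] P g12[where a=x1 and b=x2 and c=x3] by (simp add: abs_minus_commute mult_ac)
  next
    case 4 then show ?thesis using S[of x2 x3 x1] P g312[where a=x2 and b=x3 and c=x1] by (simp add: abs_minus_commute mult_ac)
  next
    case 5 then show ?thesis using S[of x3 x1 x2] P g231[where a=x3 and b=x1 and c=x2] by (simp add: abs_minus_commute mult_ac)
  next
    case 6 then show ?thesis using S[of x3 x2 x1] P g13[where a=x1 and b=x2 and c=x3] by (simp add: abs_minus_commute mult_ac)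
  qed
qed


theorem lemma1p5:
  fixes a b :: ereal and A :: "real \<Rightarrow> real" and M :: real
  defines "J \<equiv> {x::real. a < ereal x \<and> ereal x < b}"
  defines "\<Gamma> \<equiv> (\<lambda>x. Complex x (A x)) ` J"
  assumes diff: "\<forall>x\<in>J. A differentiable (at x)"
    and Mpos: "M > 0"
    and lip: "\<forall>x\<in>J. \<forall>y\<in>J. \<bar>deriv A x - deriv A y\<bar> \<le> M * \<bar>x - y\<bar>"
    and z: "z1 \<in> \<Gamma>" "z2 \<in> \<Gamma>" "z3 \<in> \<Gamma>"
    and dist: "z1 \<noteq> z2" "z2 \<noteq> z3" "z1 \<noteq> z3"
  shows "(menger_curvature z1 z2 z3)\<^sup>2 \<le> 8 * M\<^sup>2"
proof (cases "collinear {z1, z2, z3}")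
  case True
  then show ?thesis unfolding menger_curvature_def by simp
next
  case False
  obtain x1 x2 x3 where x: "x1 \<in> J" "x2 \<in> J" "x3 \<in> J"
    and zx: "z1 = Complex x1 (A x1)" "z2 = Complex x2 (A x2)" "z3 = Complex x3 (A x3)"
    using z unfolding \<Gamma>_def by blast
  have dx: "x1 \<noteq> x2" "x2 \<noteq> x3" "x1 \<noteq> x3" using dist zx by auto
  define g where "g = (\<lambda>x1 x2 x3. (x2-x1)*(A x3 - A x1) - (A x2 - A x1)*(x3-x1))"
  have g12: "\<bar>g b a c\<bar> = \<bar>g a b c\<bar>" for a b c
  proof -
    have "g b a c = - g a b c" unfolding g_def by algebra
    then show ?thesis by simp
  qed
  have g23: "\<bar>g a c b\<bar> = \<bar>g a b c\<bar>" for a b c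
  proof -
    have "g a c b = - g a b c" unfolding g_def by algebra
    then show ?thesis by simp
  qed
  have S: "\<bar>g u v w\<bar> \<le> M * \<bar>v - u\<bar> * \<bar>w - u\<bar> * \<bar>w - v\<bar>"
    if "u \<in> J" "v \<in> J" "w \<in> J" "u < v" "v < w" for u v w
  proof -
    have sub: "y \<in> J" if "u \<le> y" "y \<le> w" for y
    proof -
      have "a < ereal u" "ereal w < b" using \<open>u \<in> J\<close> \<open>w \<in> J\<close> unfolding J_def by auto
      moreover have "ereal u \<le> ereal y" "ereal y \<le> ereal w" using that by auto
      ultimately have "a < ereal y" "ereal y < b"
        using less_le_trans[of a "ereal u" "ereal y"] le_less_trans[of "ereal y" "ereal w" b] by auto
      then show ?thesis unfolding J_def by auto
    qed
    have "\<bar>g u v w\<bar> \<le> M * (v-u)*(w-u)*(w-v)"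
      unfolding g_def
    proof (rule sorted_bound)
      show "DERIV A y :> deriv A y" if "u \<le> y" "y \<le> w" for y
        using diff sub[OF that] DERIV_deriv_iff_real_differentiable by blast
      show "\<bar>deriv A x - deriv A y\<bar> \<le> M * \<bar>x - y\<bar>" if "u \<le> x" "x \<le> w" "u \<le> y" "y \<le> w" for x y
        using lip sub that by blast
    qed (use that Mpos in auto)
    then show ?thesis using that by simp
  qed
  have B: "\<bar>g x1 x2 x3\<bar> \<le> M * \<bar>x2 - x1\<bar> * \<bar>x3 - x1\<bar> * \<bar>x3 - x2\<bar>"
    by (rule perm_bound[where P="\<lambda>x. x \<in> J"]) (use g12 g23 S x dx in auto)
  define pp qq ss tt where "pp = Re z2 - Re z1" "qq = Im z2 - Im z1" "ss = Re z3 - Re z1" "tt = Im z3 - Im z1"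
  define D where "D = pp * tt - qq * ss"
  define Q where "Q = (pp^2 + qq^2) * (ss^2 + tt^2) * ((ss - pp)^2 + (tt - qq)^2)"
  have Dg: "D = g x1 x2 x3" unfolding D_def pp_qq_ss_tt_def g_def zx by simp
  have D0: "D \<noteq> 0" using False collinear_if_D0[OF dist(1)] unfolding D_def pp_qq_ss_tt_def by auto
  have cQ: "(menger_curvature z1 z2 z3)^2 * Q = 4 * D^2"
    using menger_sq[OF False] D0 unfolding D_def Q_def pp_qq_ss_tt_def by simp
  define R where "R = \<bar>x2 - x1\<bar> * \<bar>x3 - x1\<bar> * \<bar>x3 - x2\<bar>"
  have Rpos: "R > 0" unfolding R_def using dx by auto
  have RQ: "R^2 \<le> Q"
  proof -
    have e: "pp = x2 - x1" "ss = x3 - x1" "ss - pp = x3 - x2" unfolding pp_qq_ss_tt_def zx by auto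
    have "R^2 = pp^2 * ss^2 * (ss - pp)^2" unfolding e(3) unfolding e(1) e(2) R_def by (simp add: power_mult_distrib)
    also have "\<dots> \<le> Q" unfolding Q_def
      by (intro mult_mono) (auto simp: add_increasing2)
    finally show ?thesis .
  qed
  have "\<bar>D\<bar> \<le> M * R" using B Dg unfolding R_def by (simp add: mult.assoc)
  then have "\<bar>D\<bar>^2 \<le> (M * R)^2" by (intro power_mono) auto
  then have "D^2 \<le> (M * R)^2" by simp
  then have c1: "(menger_curvature z1 z2 z3)^2 * Q \<le> 4 * M^2 * R^2" using cQ by (simp add: power_mult_distrib)
  have c2: "4 * M^2 * R^2 \<le> 4 * M^2 * Q" using RQ by (intro mult_left_mono) auto
  have "R^2 > 0" using Rpos by simp
  then have Qp: "Q > 0" using RQ by linarith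
  have "(menger_curvature z1 z2 z3)^2 * Q \<le> (4 * M^2) * Q" using c1 c2 by linarith
  then have "(menger_curvature z1 z2 z3)^2 \<le> 4 * M^2" using Qp by (simp add: mult_le_cancel_right)
  moreover have "M^2 \<ge> 0" by simp
  ultimately show ?thesis by linarith
qed

end
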